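(* Let $p\ge 2$ and $\varphi\in\mathbb{C}^{p-1}\setminus\Omega_1$. Then $\dim H^1(F_\varphi,F_\varphi)=p-1$.
   Context: Let $p\ge 2$ and $\varphi=(\varphi_1,\dots,\varphi_{p-1})\in\mathbb{C}^{p-1}$. $F_\varphi$ denotes the $2p$-dimensional complex Lie algebra with basis $X_1,\dots,X_{2p}$ whose nonzero brackets (up to antisymmetry) are $[X_1,X_2]=X_1$, $[X_2,X_{2k+1}]=\varphi_kX_{2k+1}$, $[X_2,X_{2k+2}]=-(1+\varphi_k)X_{2k+2}$, $[X_{2k+1},X_{2k+2}]=X_1$ for $1\le k\le p-1$. $\Omega_1\subset\mathbb{C}^{p-1}$ is the union of the hyperplanes $\{1+\varphi_i+\varphi_j=0\}$, $\{2+\varphi_i+\varphi_j=0\}$ ($1\le i,j\le p-1$), $\{\varphi_i-\varphi_j=0\}$ ($1\le i\ne j\le p-1$), $\{\varphi_i=0\}$, $\{\varphi_i+1=0\}$, $\{2\varphi_i+1=0\}$ ($1\le i\le p-1$). $H^1(\mathfrak g,\mathfrak g)$ is the first Chevalley–Eilenberg cohomology with adjoint coefficients (derivations modulo inner derivations). *)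

theory Defs
  imports Complex_Main "HOL-Library.Function_Algebras"
begin

text \<open>Vectors of the 2p-dimensional Lie algebra F_phi are represented as functions
  nat => complex supported on the index set {1..2p} (coefficients w.r.t. X_1,...,X_2p).
  Linear endomorphisms are represented by their matrices nat => nat => complex
  (entry i j = coefficient of X_i in the image of X_j), supported on {1..2p} x {1..2p}.
  phi :: nat => complex, only phi 1, ..., phi (p-1) matter.\<close>

definition idx :: "nat \<Rightarrow> nat set" where
  "idx p = {1..2*p}"

definition ebas :: "nat \<Rightarrow> nat \<Rightarrow> complex" where
  "ebas j = (\<lambda>i. if i = j then 1 else 0)"

text \<open>The listed nonzero brackets [X_j, X_k] (with j < k).\<close>
definition br0 :: "(nat \<Rightarrow> complex) \<Rightarrow> nat \<Rightarrow> nat \<Rightarrow> nat \<Rightarrow> nat \<Rightarrow> complex" where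
  "br0 phi p j k =
     (if j = 1 \<and> k = 2 then ebas 1
      else if j = 2 \<and> 3 \<le> k \<and> k \<le> 2*p \<and> odd k then (\<lambda>i. phi ((k - 1) div 2) * ebas k i)
      else if j = 2 \<and> 4 \<le> k \<and> k \<le> 2*p \<and> even k then (\<lambda>i. - (1 + phi ((k - 2) div 2)) * ebas k i)
      else if 3 \<le> j \<and> odd j \<and> k = j + 1 \<and> k \<le> 2*p then ebas 1
      else (\<lambda>i. 0))"

definition brk :: "(nat \<Rightarrow> complex) \<Rightarrow> nat \<Rightarrow> nat \<Rightarrow> nat \<Rightarrow> nat \<Rightarrow> complex" where
  "brk phi p j k = (\<lambda>i. br0 phi p j k i - br0 phi p k j i)"

definition lie :: "(nat \<Rightarrow> complex) \<Rightarrow> nat \<Rightarrow> (nat \<Rightarrow> complex) \<Rightarrow> (nat \<Rightarrow> complex) \<Rightarrow> nat \<Rightarrow> complex" where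
  "lie phi p x y = (\<lambda>i. \<Sum>j\<in>idx p. \<Sum>k\<in>idx p. x j * y k * brk phi p j k i)"

definition supp_vec :: "nat \<Rightarrow> (nat \<Rightarrow> complex) \<Rightarrow> bool" where
  "supp_vec p x \<longleftrightarrow> (\<forall>i. i \<notin> idx p \<longrightarrow> x i = 0)"

definition supp_mat :: "nat \<Rightarrow> (nat \<Rightarrow> nat \<Rightarrow> complex) \<Rightarrow> bool" where
  "supp_mat p D \<longleftrightarrow> (\<forall>i j. i \<notin> idx p \<or> j \<notin> idx p \<longrightarrow> D i j = 0)"

definition app :: "nat \<Rightarrow> (nat \<Rightarrow> nat \<Rightarrow> complex) \<Rightarrow> (nat \<Rightarrow> complex) \<Rightarrow> nat \<Rightarrow> complex" where
  "app p D x = (\<lambda>i. \<Sum>j\<in>idx p. D i j * x j)"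

definition Der :: "(nat \<Rightarrow> complex) \<Rightarrow> nat \<Rightarrow> (nat \<Rightarrow> nat \<Rightarrow> complex) set" where
  "Der phi p = {D. supp_mat p D \<and>
      (\<forall>x y. supp_vec p x \<and> supp_vec p y \<longrightarrow>
         app p D (lie phi p x y) = lie phi p (app p D x) y + lie phi p x (app p D y))}"

definition ad :: "(nat \<Rightarrow> complex) \<Rightarrow> nat \<Rightarrow> (nat \<Rightarrow> complex) \<Rightarrow> nat \<Rightarrow> nat \<Rightarrow> complex" where
  "ad phi p x = (\<lambda>i j. if i \<in> idx p \<and> j \<in> idx p then lie phi p x (ebas j) i else 0)"

definition Inn :: "(nat \<Rightarrow> complex) \<Rightarrow> nat \<Rightarrow> (nat \<Rightarrow> nat \<Rightarrow> complex) set" where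
  "Inn phi p = {ad phi p x | x. supp_vec p x}"

definition mscale :: "complex \<Rightarrow> (nat \<Rightarrow> nat \<Rightarrow> complex) \<Rightarrow> nat \<Rightarrow> nat \<Rightarrow> complex" where
  "mscale c D = (\<lambda>i j. c * D i j)"

definition notOmega1 :: "nat \<Rightarrow> (nat \<Rightarrow> complex) \<Rightarrow> bool" where
  "notOmega1 p phi \<longleftrightarrow>
     (\<forall>i\<in>{1..p-1}. \<forall>j\<in>{1..p-1}.
         1 + phi i + phi j \<noteq> 0 \<and> 2 + phi i + phi j \<noteq> 0 \<and> (i \<noteq> j \<longrightarrow> phi i - phi j \<noteq> 0)) \<and>
     (\<forall>i\<in>{1..p-1}. phi i \<noteq> 0 \<and> phi i + 1 \<noteq> 0 \<and> 2 * phi i + 1 \<noteq> 0)"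

end

theory Submission
  imports Defs
begin


definition lam :: "(nat \<Rightarrow> complex) \<Rightarrow> nat \<Rightarrow> complex" where
 "lam phi k = (if k = 1 then -1 else if k = 2 then 0 else if odd k then phi ((k-1) div 2) else -(1 + phi ((k-1) div 2)))"

definition prr :: "nat \<Rightarrow> nat \<Rightarrow> nat \<Rightarrow> bool" where
 "prr p j k \<longleftrightarrow> odd j \<and> 3 \<le> j \<and> k = j+1 \<and> k \<le> 2*p"

lemma e: "even k \<Longrightarrow> (k - 2) div 2 = (k - 1) div 2" for k :: nat
proof -
  assume "even k" then obtain b where "k = 2*b" ..
  then show ?thesis by (cases b) auto
qed

lemma br0_eq:
  "br0 phi p j k i = (if j=1 \<and> k=2 \<and> i=1 then 1 else 0)
     + (if j=2 \<and> i=k \<and> 3 \<le> k \<and> k \<le> 2*p then lam phi k else 0)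
     + (if i=1 \<and> prr p j k then 1 else 0)"
proof -
  have ai: "(if c then f else g) x = (if c then f x else g x)" for c f g and x :: nat
    by simp
  show ?thesis
  unfolding br0_def ai
  apply (cases "j = 1 \<and> k = 2")
   apply (simp add: ebas_def prr_def)
  apply (cases "j = 2 \<and> 3 \<le> k \<and> k \<le> 2*p")
   apply (cases "odd k")
    apply (simp add: ebas_def prr_def lam_def)
   apply (cases "k = 3", simp)
   apply (simp add: ebas_def prr_def lam_def e)
  apply (cases "3 \<le> j \<and> odd j \<and> k = j + 1 \<and> k \<le> 2*p")
   apply (simp add: ebas_def prr_def lam_def)
  apply (auto simp add: ebas_def prr_def lam_def)
  done
qed

lemma brk_eq:
  assumes "p \<ge> 1"
  shows "brk phi p j k i = (if j=2 \<and> i=k \<and> k\<in>idx p then lam phi k else 0)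
     - (if k=2 \<and> i=j \<and> j\<in>idx p then lam phi j else 0)
     + (if i=1 \<and> prr p j k then 1 else 0) - (if i=1 \<and> prr p k j then 1 else 0)"
  using assms unfolding brk_def br0_eq idx_def
  by (auto simp: lam_def prr_def)

lemma sum_pin:
  fixes w c :: "nat \<Rightarrow> complex"
  assumes "finite A" "\<And>m. C m \<longleftrightarrow> (m = a \<and> R)"
  shows "(\<Sum>m\<in>A. w m * (if C m then c m else 0)) = (if a \<in> A \<and> R then w a * c a else 0)"
proof -
  have "(\<Sum>m\<in>A. w m * (if C m then c m else 0)) = (\<Sum>m\<in>A. if m = a then (if R then w m * c m else 0) else 0)"
    by (rule sum.cong) (auto simp: assms(2))
  also have "\<dots> = (if a \<in> A \<and> R then w a * c a else 0)"
    using assms(1) by (simp add: sum.delta)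
  finally show ?thesis .
qed

lemma fin_idx[simp]: "finite (idx p)" by (simp add: idx_def)

lemma S3:
  assumes "p \<ge> 1"
  shows "(\<Sum>m\<in>idx p. w m * brk phi p j k m) = (if j=2 \<and> k\<in>idx p then w k * lam phi k else 0)
     - (if k=2 \<and> j\<in>idx p then w j * lam phi j else 0) + (if prr p j k then w 1 else 0) - (if prr p k j then w 1 else 0)"
proof -
  have i1: "1 \<in> idx p" using assms by (simp add: idx_def)
  have "(\<Sum>m\<in>idx p. w m * brk phi p j k m) =
     (\<Sum>m\<in>idx p. w m * (if j=2 \<and> m=k \<and> k\<in>idx p then lam phi k else 0))
     - (\<Sum>m\<in>idx p. w m * (if k=2 \<and> m=j \<and> j\<in>idx p then lam phi j else 0))
     + (\<Sum>m\<in>idx p. w m * (if m=1 \<and> prr p j k then 1 else 0))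
     - (\<Sum>m\<in>idx p. w m * (if m=1 \<and> prr p k j then 1 else 0))"
    by (simp add: brk_eq[OF assms] ring_distribs sum.distrib sum_subtractf)
  also have "\<dots> = (if j=2 \<and> k\<in>idx p then w k * lam phi k else 0)
     - (if k=2 \<and> j\<in>idx p then w j * lam phi j else 0) + (if prr p j k then w 1 else 0) - (if prr p k j then w 1 else 0)"
    apply (subst sum_pin[where a=k and R="j=2 \<and> k\<in>idx p"], simp, blast)
    apply (subst sum_pin[where a=j and R="k=2 \<and> j\<in>idx p"], simp, blast)
    apply (subst sum_pin[where a=1 and R="prr p j k"], simp, blast)
    apply (subst sum_pin[where a=1 and R="prr p k j"], simp, blast)
    using i1 by auto
  finally show ?thesis .
qed

lemma prr_fst: "prr p m k \<longleftrightarrow> (m = k - 1 \<and> even k \<and> 4 \<le> k \<and> k \<le> 2*p)"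
  unfolding prr_def by auto

lemma prr_snd: "prr p j m \<longleftrightarrow> (m = j + 1 \<and> odd j \<and> 3 \<le> j \<and> j + 1 \<le> 2*p)"
  unfolding prr_def by auto

lemma S1:
  assumes "p \<ge> 1"
  shows "(\<Sum>m\<in>idx p. w m * brk phi p m k i) = (if i=k \<and> k\<in>idx p then w 2 * lam phi k else 0)
     - (if k=2 \<and> i\<in>idx p then w i * lam phi i else 0)
     + (if i=1 \<and> even k \<and> 4 \<le> k \<and> k \<le> 2*p then w (k-1) else 0)
     - (if i=1 \<and> odd k \<and> 3 \<le> k \<and> k+1 \<le> 2*p then w (k+1) else 0)"
proof -
  have i1: "2 \<in> idx p" using assms by (simp add: idx_def)
  have "(\<Sum>m\<in>idx p. w m * brk phi p m k i) =
     (\<Sum>m\<in>idx p. w m * (if m=2 \<and> i=k \<and> k\<in>idx p then lam phi k else 0))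
     - (\<Sum>m\<in>idx p. w m * (if k=2 \<and> i=m \<and> m\<in>idx p then lam phi m else 0))
     + (\<Sum>m\<in>idx p. w m * (if i=1 \<and> prr p m k then 1 else 0))
     - (\<Sum>m\<in>idx p. w m * (if i=1 \<and> prr p k m then 1 else 0))"
    by (simp add: brk_eq[OF assms] ring_distribs sum.distrib sum_subtractf)
  also have "\<dots> = (if i=k \<and> k\<in>idx p then w 2 * lam phi k else 0)
     - (if k=2 \<and> i\<in>idx p then w i * lam phi i else 0)
     + (if i=1 \<and> even k \<and> 4 \<le> k \<and> k \<le> 2*p then w (k-1) else 0)
     - (if i=1 \<and> odd k \<and> 3 \<le> k \<and> k+1 \<le> 2*p then w (k+1) else 0)"
    apply (subst sum_pin[where a=2 and R="i=k \<and> k\<in>idx p"], simp, blast)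
    apply (subst sum_pin[where a=i and R="k=2 \<and> i\<in>idx p"], simp, blast)
    apply (subst sum_pin[where a="k-1" and R="i=1 \<and> even k \<and> 4 \<le> k \<and> k \<le> 2*p"], simp, simp add: prr_fst, blast)
    apply (subst sum_pin[where a="k+1" and R="i=1 \<and> odd k \<and> 3 \<le> k \<and> k+1 \<le> 2*p"], simp, simp add: prr_snd, blast)
    using i1 by (auto simp: idx_def)
  finally show ?thesis .
qed

lemma S2:
  assumes "p \<ge> 1"
  shows "(\<Sum>m\<in>idx p. w m * brk phi p j m i) = (if j=2 \<and> i\<in>idx p then w i * lam phi i else 0)
     - (if i=j \<and> j\<in>idx p then w 2 * lam phi j else 0)
     + (if i=1 \<and> odd j \<and> 3 \<le> j \<and> j+1 \<le> 2*p then w (j+1) else 0)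
     - (if i=1 \<and> even j \<and> 4 \<le> j \<and> j \<le> 2*p then w (j-1) else 0)"
proof -
  have i1: "2 \<in> idx p" using assms by (simp add: idx_def)
  have "(\<Sum>m\<in>idx p. w m * brk phi p j m i) =
     (\<Sum>m\<in>idx p. w m * (if j=2 \<and> i=m \<and> m\<in>idx p then lam phi m else 0))
     - (\<Sum>m\<in>idx p. w m * (if m=2 \<and> i=j \<and> j\<in>idx p then lam phi j else 0))
     + (\<Sum>m\<in>idx p. w m * (if i=1 \<and> prr p j m then 1 else 0))
     - (\<Sum>m\<in>idx p. w m * (if i=1 \<and> prr p m j then 1 else 0))"
    by (simp add: brk_eq[OF assms] ring_distribs sum.distrib sum_subtractf)
  also have "\<dots> = (if j=2 \<and> i\<in>idx p then w i * lam phi i else 0)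
     - (if i=j \<and> j\<in>idx p then w 2 * lam phi j else 0)
     + (if i=1 \<and> odd j \<and> 3 \<le> j \<and> j+1 \<le> 2*p then w (j+1) else 0)
     - (if i=1 \<and> even j \<and> 4 \<le> j \<and> j \<le> 2*p then w (j-1) else 0)"
    apply (subst sum_pin[where a=i and R="j=2 \<and> i\<in>idx p"], simp, blast)
    apply (subst sum_pin[where a=2 and R="i=j \<and> j\<in>idx p"], simp, blast)
    apply (subst sum_pin[where a="j+1" and R="i=1 \<and> odd j \<and> 3 \<le> j \<and> j+1 \<le> 2*p"], simp, simp add: prr_snd, blast)
    apply (subst sum_pin[where a="j-1" and R="i=1 \<and> even j \<and> 4 \<le> j \<and> j \<le> 2*p"], simp, simp add: prr_fst, blast)
    using i1 by (auto simp: idx_def)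
  finally show ?thesis .
qed

interpretation V: vector_space mscale
  by unfold_locales (auto simp: mscale_def fun_eq_iff algebra_simps)

definition cnd :: "(nat \<Rightarrow> complex) \<Rightarrow> nat \<Rightarrow> (nat \<Rightarrow> nat \<Rightarrow> complex) \<Rightarrow> nat \<Rightarrow> nat \<Rightarrow> nat \<Rightarrow> bool" where
  "cnd phi p D j k i \<longleftrightarrow> (\<Sum>m\<in>idx p. D i m * brk phi p j k m) =
     (\<Sum>m\<in>idx p. D m j * brk phi p m k i) + (\<Sum>m\<in>idx p. D m k * brk phi p j m i)"

lemma sum_ebas: "(\<Sum>a\<in>A. ebas j a * f a) = (if j \<in> A \<and> finite A then f j else 0)"
proof (cases "finite A")
  case True
  have "(\<Sum>a\<in>A. ebas j a * f a) = (\<Sum>a\<in>A. if a = j then f a else 0)"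
    by (rule sum.cong) (auto simp: ebas_def)
  then show ?thesis using True by (simp add: sum.delta')
qed simp

lemma sum_ebas': "(\<Sum>a\<in>A. f a * ebas j a) = (if j \<in> A \<and> finite A then f j else 0)"
  using sum_ebas[of j f A] by (simp add: mult.commute)

lemma lie_ebas_right: "k \<in> idx p \<Longrightarrow> lie phi p x (ebas k) i = (\<Sum>a\<in>idx p. x a * brk phi p a k i)"
  unfolding lie_def
proof (rule sum.cong[OF refl])
  fix a assume k: "k \<in> idx p"
  have "(\<Sum>b\<in>idx p. x a * ebas k b * brk phi p a b i) = (\<Sum>b\<in>idx p. ebas k b * (x a * brk phi p a b i))"
    by (rule sum.cong) (simp_all add: mult_ac)
  then show "(\<Sum>b\<in>idx p. x a * ebas k b * brk phi p a b i) = x a * brk phi p a k i"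
    using k by (simp add: sum_ebas)
qed

lemma lie_ebas_left: "j \<in> idx p \<Longrightarrow> lie phi p (ebas j) y i = (\<Sum>b\<in>idx p. y b * brk phi p j b i)"
proof -
  assume j: "j \<in> idx p"
  have "lie phi p (ebas j) y i = (\<Sum>a\<in>idx p. ebas j a * (\<Sum>b\<in>idx p. y b * brk phi p a b i))"
    unfolding lie_def by (simp add: sum_distrib_left mult_ac)
  then show ?thesis using j by (simp add: sum_ebas)
qed

lemma app_ebas: "j \<in> idx p \<Longrightarrow> app p D (ebas j) = (\<lambda>a. D a j)"
  unfolding app_def by (simp add: fun_eq_iff sum_ebas')

lemma supp_ebas: "j \<in> idx p \<Longrightarrow> supp_vec p (ebas j)"
  unfolding supp_vec_def ebas_def by auto

lemma lie_ebas_ebas: "j \<in> idx p \<Longrightarrow> k \<in> idx p \<Longrightarrow> lie phi p (ebas j) (ebas k) = brk phi p j k"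
  by (simp add: fun_eq_iff lie_ebas_left sum_ebas mult.commute)

lemma trip_swap:
  fixes F :: "nat \<Rightarrow> nat \<Rightarrow> nat \<Rightarrow> complex"
  shows "(\<Sum>a\<in>A. \<Sum>b\<in>A. \<Sum>m\<in>A. F a b m) = (\<Sum>m\<in>A. \<Sum>b\<in>A. \<Sum>a\<in>A. F a b m)"
proof -
  have "(\<Sum>a\<in>A. \<Sum>b\<in>A. \<Sum>m\<in>A. F a b m) = (\<Sum>b\<in>A. \<Sum>a\<in>A. \<Sum>m\<in>A. F a b m)"
    by (rule sum.swap)
  also have "\<dots> = (\<Sum>b\<in>A. \<Sum>m\<in>A. \<Sum>a\<in>A. F a b m)"
    by (rule sum.cong[OF refl], rule sum.swap)
  also have "\<dots> = (\<Sum>m\<in>A. \<Sum>b\<in>A. \<Sum>a\<in>A. F a b m)"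
    by (rule sum.swap)
  finally show ?thesis .
qed

lemma trip_swap2:
  fixes F :: "nat \<Rightarrow> nat \<Rightarrow> nat \<Rightarrow> complex"
  shows "(\<Sum>a\<in>A. \<Sum>b\<in>A. \<Sum>m\<in>A. F a b m) = (\<Sum>m\<in>A. \<Sum>a\<in>A. \<Sum>b\<in>A. F a b m)"
proof -
  have "(\<Sum>a\<in>A. \<Sum>b\<in>A. \<Sum>m\<in>A. F a b m) = (\<Sum>a\<in>A. \<Sum>m\<in>A. \<Sum>b\<in>A. F a b m)"
    by (rule sum.cong[OF refl], rule sum.swap)
  also have "\<dots> = (\<Sum>m\<in>A. \<Sum>a\<in>A. \<Sum>b\<in>A. F a b m)"
    by (rule sum.swap)
  finally show ?thesis .
qed

lemma der_iff: "D \<in> Der phi p \<longleftrightarrow> supp_mat p D \<and> (\<forall>j\<in>idx p. \<forall>k\<in>idx p. \<forall>i. cnd phi p D j k i)"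
proof
  assume D: "D \<in> Der phi p"
  show "supp_mat p D \<and> (\<forall>j\<in>idx p. \<forall>k\<in>idx p. \<forall>i. cnd phi p D j k i)"
  proof (intro conjI ballI allI)
    show "supp_mat p D" using D by (simp add: Der_def)
    fix j k i assume j: "j \<in> idx p" and k: "k \<in> idx p"
    have "app p D (lie phi p (ebas j) (ebas k)) = lie phi p (app p D (ebas j)) (ebas k) + lie phi p (ebas j) (app p D (ebas k))"
      using D supp_ebas[OF j] supp_ebas[OF k] by (simp add: Der_def)
    then have "app p D (lie phi p (ebas j) (ebas k)) i = lie phi p (app p D (ebas j)) (ebas k) i + lie phi p (ebas j) (app p D (ebas k)) i"
      by simp
    then show "cnd phi p D j k i"
      using j k unfolding cnd_def
      by (simp add: lie_ebas_ebas app_ebas lie_ebas_left lie_ebas_right) (simp add: app_def)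
  qed
next
  assume A: "supp_mat p D \<and> (\<forall>j\<in>idx p. \<forall>k\<in>idx p. \<forall>i. cnd phi p D j k i)"
  show "D \<in> Der phi p"
    unfolding Der_def
  proof (intro CollectI conjI allI impI)
    show "supp_mat p D" using A by simp
    fix x y :: "nat \<Rightarrow> complex"
    show "app p D (lie phi p x y) = lie phi p (app p D x) y + lie phi p x (app p D y)"
    proof
      fix i
      let ?I = "idx p"
      have "app p D (lie phi p x y) i = (\<Sum>m\<in>?I. \<Sum>a\<in>?I. \<Sum>b\<in>?I. D i m * (x a * y b * brk phi p a b m))"
        unfolding app_def lie_def by (simp add: sum_distrib_left)
      also have "\<dots> = (\<Sum>a\<in>?I. \<Sum>b\<in>?I. \<Sum>m\<in>?I. D i m * (x a * y b * brk phi p a b m))"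
        by (rule trip_swap2[symmetric])
      also have "\<dots> = (\<Sum>a\<in>?I. \<Sum>b\<in>?I. x a * y b * (\<Sum>m\<in>?I. D i m * brk phi p a b m))"
        by (simp add: sum_distrib_left mult_ac)
      also have "\<dots> = (\<Sum>a\<in>?I. \<Sum>b\<in>?I. x a * y b * ((\<Sum>m\<in>?I. D m a * brk phi p m b i) + (\<Sum>m\<in>?I. D m b * brk phi p a m i)))"
        using A by (intro sum.cong refl) (simp add: cnd_def)
      also have "\<dots> = (\<Sum>a\<in>?I. \<Sum>b\<in>?I. \<Sum>m\<in>?I. x a * y b * D m a * brk phi p m b i)
          + (\<Sum>a\<in>?I. \<Sum>b\<in>?I. \<Sum>m\<in>?I. x a * y b * D m b * brk phi p a m i)"
        by (simp add: sum_distrib_left ring_distribs sum.distrib mult_ac)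
      also have "(\<Sum>a\<in>?I. \<Sum>b\<in>?I. \<Sum>m\<in>?I. x a * y b * D m a * brk phi p m b i) = lie phi p (app p D x) y i"
      proof -
        have "lie phi p (app p D x) y i = (\<Sum>m\<in>?I. \<Sum>b\<in>?I. \<Sum>a\<in>?I. x a * y b * D m a * brk phi p m b i)"
          unfolding lie_def app_def by (simp only: sum_distrib_right) (simp add: mult_ac)
        then show ?thesis by (subst trip_swap) simp
      qed
      also have "(\<Sum>a\<in>?I. \<Sum>b\<in>?I. \<Sum>m\<in>?I. x a * y b * D m b * brk phi p a m i) = lie phi p x (app p D y) i"
      proof -
        have "lie phi p x (app p D y) i = (\<Sum>a\<in>?I. \<Sum>m\<in>?I. \<Sum>b\<in>?I. x a * y b * D m b * brk phi p a m i)"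
          unfolding lie_def app_def by (simp only: sum_distrib_right sum_distrib_left) (simp add: mult_ac)
        also have "\<dots> = (\<Sum>a\<in>?I. \<Sum>b\<in>?I. \<Sum>m\<in>?I. x a * y b * D m b * brk phi p a m i)"
          by (rule sum.cong[OF refl], rule sum.swap)
        finally show ?thesis by simp
      qed
      finally show "app p D (lie phi p x y) i = (lie phi p (app p D x) y + lie phi p x (app p D y)) i"
        by simp
    qed
  qed
qed

lemma cnd_expand:
  assumes "p \<ge> 1"
  shows "cnd phi p D j k i \<longleftrightarrow>
    (if j=2 \<and> k\<in>idx p then D i k * lam phi k else 0)
     - (if k=2 \<and> j\<in>idx p then D i j * lam phi j else 0) + (if prr p j k then D i 1 else 0) - (if prr p k j then D i 1 else 0)
   = ((if i=k \<and> k\<in>idx p then D 2 j * lam phi k else 0)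
     - (if k=2 \<and> i\<in>idx p then D i j * lam phi i else 0)
     + (if i=1 \<and> even k \<and> 4 \<le> k \<and> k \<le> 2*p then D (k-1) j else 0)
     - (if i=1 \<and> odd k \<and> 3 \<le> k \<and> k+1 \<le> 2*p then D (k+1) j else 0))
    + ((if j=2 \<and> i\<in>idx p then D i k * lam phi i else 0)
     - (if i=j \<and> j\<in>idx p then D 2 k * lam phi j else 0)
     + (if i=1 \<and> odd j \<and> 3 \<le> j \<and> j+1 \<le> 2*p then D (j+1) k else 0)
     - (if i=1 \<and> even j \<and> 4 \<le> j \<and> j \<le> 2*p then D (j-1) k else 0))"
  unfolding cnd_def
  using S1[OF assms, of "\<lambda>m. D m j" phi k i] S2[OF assms, of "\<lambda>m. D m k" phi j i] S3[OF assms, of "\<lambda>m. D i m" phi j k]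
  by simp

lemma idx_cases:
  assumes "n \<in> idx p"
  obtains "n = 1" | "n = 2" | q where "1 \<le> q" "q < p" "n = 2*q+1" | q where "1 \<le> q" "q < p" "n = 2*q+2"
proof -
  have "n \<ge> 1" using assms by (simp add: idx_def)
  then have "n = 1 \<or> n = 2 \<or> (n \<ge> 3 \<and> odd n) \<or> (n \<ge> 3 \<and> even n)" by auto
  then consider "n = 1" | "n = 2" | "n \<ge> 3" "odd n" | "n \<ge> 3" "even n" by blast
  then show ?thesis
  proof cases
    case 3
    then obtain q where "n = 2*q+1" by (metis oddE)
    then show ?thesis using 3 assms that(3)[of q] by (auto simp: idx_def)
  next
    case 4
    then obtain q where "n = 2*q" by (metis evenE)
    then show ?thesis using 4 assms that(4)[of "q - 1"] by (auto simp: idx_def)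
  qed (use that in auto)
qed

lemma lam_simps[simp]:
  "lam phi 1 = -1" "lam phi 2 = 0" "1 \<le> q \<Longrightarrow> lam phi (2*q+1) = phi q"
  "1 \<le> q \<Longrightarrow> lam phi (2*q+2) = -(1 + phi q)"
  "lam phi (Suc 0) = -1" "1 \<le> q \<Longrightarrow> lam phi (Suc (2*q)) = phi q"
  "1 \<le> q \<Longrightarrow> lam phi (Suc (Suc (2*q))) = -(1 + phi q)"
  unfolding lam_def by auto

lemma par_simps[simp]:
  "2*q+1 \<noteq> 2*(r::nat)+2" "2*r+2 \<noteq> 2*(q::nat)+1" "2*(q::nat)+1 \<noteq> 2" "2 \<noteq> 2*(q::nat)+1"
  "2*(q::nat)+1 \<noteq> 2*r" "2*(r::nat) \<noteq> 2*q+1"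
  "Suc (2*q) \<noteq> 2*(r::nat)" "2*(r::nat) \<noteq> Suc (2*q)"
  "Suc (Suc (2*q)) \<noteq> Suc (2*(r::nat))" "Suc (2*(r::nat)) \<noteq> Suc (Suc (2*q))"
  "Suc (2*q) \<noteq> 2" "2 \<noteq> Suc (2*q)"
  "Suc (Suc (Suc (2*q))) \<noteq> 2*(r::nat)" "2*(r::nat) \<noteq> Suc (Suc (Suc (2*q)))"
  by presburger+

definition adf :: "(nat \<Rightarrow> complex) \<Rightarrow> nat \<Rightarrow> (nat \<Rightarrow> complex) \<Rightarrow> nat \<Rightarrow> nat \<Rightarrow> complex" where
  "adf phi p x i k = (if i = k \<and> k\<in>idx p then x 2 * lam phi k else 0) - (if k=2 \<and> i\<in>idx p then x i * lam phi i else 0)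
    + (if i=1 \<and> even k \<and> 4\<le>k \<and> k\<le>2*p then x (k-1) else 0) - (if i=1 \<and> odd k \<and> 3\<le>k \<and> k+1\<le>2*p then x (k+1) else 0)"

lemma ad_eq: "p \<ge> 1 \<Longrightarrow> ad phi p x = adf phi p x"
  unfolding ad_def adf_def
  by (simp add: fun_eq_iff lie_ebas_right S1) (auto simp: idx_def)

lemma adf_cnd:
  assumes "p \<ge> 1" "j \<in> idx p" "k \<in> idx p" "i \<in> idx p"
  shows "cnd phi p (adf phi p x) j k i"
  unfolding cnd_expand[OF assms(1)]
  apply (rule idx_cases[OF assms(2)]; rule idx_cases[OF assms(3)]; rule idx_cases[OF assms(4)])
  using assms(1) apply (simp_all add: adf_def idx_def prr_def)
  apply (simp_all add: algebra_simps)
  done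

lemma adf_zero: "i \<notin> idx p \<or> k \<notin> idx p \<Longrightarrow> p \<ge> 1 \<Longrightarrow> adf phi p x i k = 0"
  unfolding adf_def by (auto simp: idx_def)

lemma adf_cnd_all:
  assumes "p \<ge> 1" "j \<in> idx p" "k \<in> idx p"
  shows "cnd phi p (adf phi p x) j k i"
proof (cases "i \<in> idx p")
  case True then show ?thesis using adf_cnd assms by blast
next
  case False
  have [simp]: "i \<noteq> 1" "i \<noteq> Suc 0" "i \<noteq> 2" using False assms(1) by (auto simp: idx_def)
  have [simp]: "adf phi p x i m = 0" for m using False assms(1) adf_zero by blast
  have [simp]: "i \<noteq> j" "i \<noteq> k" using False assms by auto
  show ?thesis unfolding cnd_expand[OF assms(1)] using False assms
    by simp
qed

lemma adf_Der: "p \<ge> 1 \<Longrightarrow> adf phi p x \<in> Der phi p"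
  unfolding der_iff supp_mat_def using adf_cnd_all adf_zero by blast

definition Tm :: "nat \<Rightarrow> nat \<Rightarrow> nat \<Rightarrow> complex" where
  "Tm q = (\<lambda>i k. if i = k \<and> i = 2*q+1 then 1 else if i = k \<and> i = 2*q+2 then -1 else 0)"

lemma Tm_cnd:
  assumes "p \<ge> 1" "1 \<le> q" "q < p" "j \<in> idx p" "k \<in> idx p" "i \<in> idx p"
  shows "cnd phi p (Tm q) j k i"
  unfolding cnd_expand[OF assms(1)]
  apply (rule idx_cases[OF assms(4)]; rule idx_cases[OF assms(5)]; rule idx_cases[OF assms(6)])
  using assms(1-3) by (simp_all add: Tm_def idx_def prr_def)

lemma Tm_Der: assumes "p \<ge> 1" "1 \<le> q" "q < p" shows "Tm q \<in> Der phi p"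
  unfolding der_iff supp_mat_def
proof (intro conjI allI impI ballI)
  fix i j assume "i \<notin> idx p \<or> j \<notin> idx p"
  then show "Tm q i j = 0" using assms by (auto simp: Tm_def idx_def)
next
  fix j k i assume j: "j \<in> idx p" and k: "k \<in> idx p"
  show "cnd phi p (Tm q) j k i"
  proof (cases "i \<in> idx p")
    case True then show ?thesis using Tm_cnd assms j k by blast
  next
    case False
    have [simp]: "i \<noteq> 1" "i \<noteq> Suc 0" "i \<noteq> 2" using False assms(1) by (auto simp: idx_def)
    have [simp]: "Tm q i m = 0" for m using False assms by (auto simp: Tm_def idx_def)
    have [simp]: "i \<noteq> j" "i \<noteq> k" using False j k by auto
    show ?thesis unfolding cnd_expand[OF assms(1)] using False assms
      by simp
  qed
qed

lemma notO:
  assumes "notOmega1 p phi" "1 \<le> a" "a < p" "1 \<le> b" "b < p"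
  shows "1 + phi a + phi b \<noteq> 0" "a \<noteq> b \<Longrightarrow> phi a \<noteq> phi b" "phi a \<noteq> 0" "1 + phi a \<noteq> 0"
  using assms unfolding notOmega1_def by (auto simp: algebra_simps)

lemma notO2:
  assumes "notOmega1 p phi" "1 \<le> a" "a < p" "1 \<le> b" "b < p"
  shows "phi a \<noteq> -1" "-1 \<noteq> phi a" "phi a \<noteq> -1 - phi b" "-1 - phi a \<noteq> phi b"
proof -
  note n = notO[OF assms]
  show "phi a \<noteq> -1" using n(4) by (auto simp: add_eq_0_iff)
  then show "-1 \<noteq> phi a" by metis
  show "phi a \<noteq> -1 - phi b"
  proof
    assume "phi a = -1 - phi b" then have "1 + phi a + phi b = 0" by simp
    with n(1) show False by simp
  qed
  show "-1 - phi a \<noteq> phi b"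
  proof
    assume h: "-1 - phi a = phi b"
    have "1 + phi a + phi b = 1 + phi a + (-1 - phi a)" using h by simp
    also have "\<dots> = 0" by simp
    finally show False using n(1) by simp
  qed
qed

lemma notO3:
  assumes "notOmega1 p phi" "0 < a" "a < p"
  shows "phi a \<noteq> -1" "-1 \<noteq> phi a"
  using notO2[OF assms(1), of a a] assms by auto

lemma lam_inj:
  assumes N: "notOmega1 p phi" and i: "i \<in> idx p" and k: "k \<in> idx p" and ik: "i \<noteq> k"
  shows "lam phi i \<noteq> lam phi k"
  apply (rule idx_cases[OF i]; rule idx_cases[OF k])
  using ik by (simp_all add: notO[OF N] notO2[OF N] notO3[OF N])

lemma sum_fun2: "(\<Sum>q\<in>A. f q) i k = (\<Sum>q\<in>A. f q i k)"
  for f :: "nat \<Rightarrow> nat \<Rightarrow> nat \<Rightarrow> complex"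
  by (induction A rule: infinite_finite_induct) auto

lemma Tsum_apply:
  "(\<Sum>q\<in>{1..p-1}. mscale (c q) (Tm q)) i k =
    (if i = k \<and> 3 \<le> i \<and> i \<le> 2*p then (if odd i then c ((i-1) div 2) else - c ((i-1) div 2)) else 0)"
proof (cases "i = k \<and> 3 \<le> i \<and> i \<le> 2*p")
  case True
  define r where "r = (i - 1) div 2"
  have r: "r \<in> {1..p-1}" using True unfolding r_def by auto
  have ir: "i = 2*r+1 \<or> i = 2*r+2" using True unfolding r_def by presburger
  have "\<And>q. mscale (c q) (Tm q) i k = (if q = r then (if odd i then c r else - c r) else 0)"
    using ir True by (auto simp: mscale_def Tm_def)
  then have "(\<Sum>q\<in>{1..p-1}. mscale (c q) (Tm q)) i k = (\<Sum>q\<in>{1..p-1}. (if q = r then (if odd i then c r else - c r) else 0))"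
    by (simp add: sum_fun2)
  also have "\<dots> = (if odd i then c r else - c r)" using r by simp
  finally show ?thesis using True r_def by simp
next
  case False
  have "\<And>q. q \<in> {1..p-1} \<Longrightarrow> mscale (c q) (Tm q) i k = 0"
    using False by (auto simp: mscale_def Tm_def)
  then have "(\<Sum>q\<in>{1..p-1}. mscale (c q) (Tm q)) i k = 0" by (simp add: sum_fun2)
  then show ?thesis using False by (subst if_not_P) auto
qed

lemma Tsum_apply2:
  "(\<Sum>q\<in>{Suc 0..p - Suc 0}. mscale (c q) (Tm q)) i k =
    (if i = k \<and> 3 \<le> i \<and> i \<le> 2*p then (if odd i then c ((i-1) div 2) else - c ((i-1) div 2)) else 0)"
  using Tsum_apply[where p=p and c=c and i=i and k=k] by simp

lemma decomp:
  assumes p: "p \<ge> 1" and N: "notOmega1 p phi" and D: "D \<in> Der phi p"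
  shows "\<exists>x c. supp_vec p x \<and> D = adf phi p x + (\<Sum>q\<in>{1..p-1}. mscale (c q) (Tm q))"
proof -
  have S: "supp_mat p D" and C: "\<And>j k i. j \<in> idx p \<Longrightarrow> k \<in> idx p \<Longrightarrow> cnd phi p D j k i"
    using D unfolding der_iff by auto
  have i1: "1 \<in> idx p" and i2: "2 \<in> idx p" using p by (auto simp: idx_def)
  have i1': "Suc 0 \<in> idx p" using i1 by simp
  have F1: "D 2 2 = 0" using C[OF i2 i1, of 1] by (simp add: cnd_expand[OF p] prr_def i1')
  have F4: "D (2*q+1) (2*q+1) + D (2*q+2) (2*q+2) = D 1 1" if "1 \<le> q" "q < p" for q
  proof -
    have "2*q+1 \<in> idx p" "2*q+2 \<in> idx p" using that by (auto simp: idx_def)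
    from C[OF this, of 1] show ?thesis using that by (simp add: cnd_expand[OF p] prr_def)
  qed
  define x where "x n = (if n = 2 then - D 1 1 else if n \<in> idx p then - D n 2 / lam phi n else 0)" for n
  define c where "c q = D (2*q+1) (2*q+1) + phi q * D 1 1" for q
  have sx: "supp_vec p x" unfolding supp_vec_def x_def using i2 by auto
  have "D = adf phi p x + (\<Sum>q\<in>{1..p-1}. mscale (c q) (Tm q))"
  proof (intro ext)
    fix i k
    have "(i \<notin> idx p \<or> k \<notin> idx p) \<or> (i \<in> idx p \<and> k = 2) \<or> (i \<in> idx p \<and> k = i \<and> k \<noteq> 2)
      \<or> (i \<in> idx p \<and> k \<in> idx p \<and> i \<noteq> k \<and> k \<noteq> 2 \<and> i \<noteq> 1) \<or> (k \<in> idx p \<and> i = 1 \<and> k \<noteq> 1 \<and> k \<noteq> 2)"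
      by blast
    then consider (out) "i \<notin> idx p \<or> k \<notin> idx p" | (k2) "i \<in> idx p" "k = 2" | (diag) "i \<in> idx p" "k = i" "k \<noteq> 2"
      | (off) "i \<in> idx p" "k \<in> idx p" "i \<noteq> k" "k \<noteq> 2" "i \<noteq> 1" | (row1) "k \<in> idx p" "i = 1" "k \<noteq> 1" "k \<noteq> 2"
      by blast
    then show "D i k = (adf phi p x + (\<Sum>q\<in>{1..p-1}. mscale (c q) (Tm q))) i k"
    proof cases
      case out
      then show ?thesis using S adf_zero[OF out p] by (auto simp: supp_mat_def Tsum_apply Tsum_apply2 idx_def)
    next
      case k2
      show ?thesis
      proof (cases "i = 2")
        case True then show ?thesis using k2 F1 by (simp add: adf_def Tsum_apply Tsum_apply2)
      next
        case False
        have "lam phi i \<noteq> lam phi 2" using lam_inj[OF N k2(1) i2 False] .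
        then have l: "lam phi i \<noteq> 0" by simp
        show ?thesis using k2 False l by (simp add: adf_def Tsum_apply Tsum_apply2 x_def)
      qed
    next
      case diag
      show ?thesis using diag(1)
      proof (cases rule: idx_cases)
        case 1 then show ?thesis using diag by (simp add: adf_def Tsum_apply Tsum_apply2 x_def)
      next
        case 2 then show ?thesis using diag by simp
      next
        case (3 q)
        then show ?thesis using diag by (simp add: adf_def Tsum_apply Tsum_apply2 x_def) (simp add: c_def algebra_simps)
      next
        case (4 q)
        have "(2 * q + 1) div 2 = q" by simp
        then show ?thesis using diag 4 F4[OF 4(1,2)] by (simp add: adf_def Tsum_apply Tsum_apply2 x_def) (simp add: c_def algebra_simps)
      qed
    next
      case off
      have n1: "\<not> prr p 2 k" "\<not> prr p k 2" "\<not> (i = 1 \<and> B)" for B using off by (auto simp: prr_def)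
      have l2: "lam phi 2 = 0" by simp
      have e: "D i k * lam phi k = D i k * lam phi i"
      proof -
        have e0: "cnd phi p D 2 k i" using C[OF i2 off(2)] .
        have "(if prr p 2 k then D i 1 else 0) = 0" "(if prr p k 2 then D i 1 else 0) = 0" using n1 by auto
        moreover have "(if i = 2 then D 2 k * lam phi 2 else 0) = 0" by simp
        ultimately show ?thesis using e0 off unfolding cnd_expand[OF p] by (simp add: i2)
      qed
      have "D i k = 0" using e lam_inj[OF N off(2,1)] off(3) by auto
      then show ?thesis using off by (simp add: adf_def Tsum_apply Tsum_apply2)
    next
      case row1
      show ?thesis using row1(1)
      proof (cases rule: idx_cases)
        case 1 then show ?thesis using row1 by simp
      next
        case 2 then show ?thesis using row1 by simp
      next
        case (3 q)
        have e: "D 1 k * phi q = - D (2*q+2) 2 - D 1 k"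
          using C[OF i2 row1(1), of 1] row1 3 by (simp add: cnd_expand[OF p] prr_def i1')
        have nz: "1 + phi q \<noteq> 0" using notO[OF N 3(1,2) 3(1,2)] by simp
        have nz2: "- 1 - phi q \<noteq> 0"
        proof
          assume a: "- 1 - phi q = 0"
          have "1 + phi q = - (- 1 - phi q)" by simp
          with a nz show False by simp
        qed
        have "2*q+2 \<in> idx p" using 3 by (auto simp: idx_def)
        moreover have v: "D 1 k = D (2*q+2) 2 / (- 1 - phi q)"
        proof -
          have "D 1 k * (- 1 - phi q) = - D 1 k - D 1 k * phi q" by (simp add: algebra_simps)
          also have "\<dots> = D (2*q+2) 2" using e by simp
          finally show ?thesis using nz2 by (simp add: eq_divide_eq)
        qed
        ultimately show ?thesis using row1 3 by (simp add: adf_def Tsum_apply Tsum_apply2 x_def)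
      next
        case (4 q)
        have e: "D 1 k * (- 1 - phi q) = D (2*q+1) 2 - D 1 k"
          using C[OF i2 row1(1), of 1] row1 4 by (simp add: cnd_expand[OF p] prr_def i1')
        have nz: "phi q \<noteq> 0" using notO[OF N 4(1,2) 4(1,2)] by simp
        have "2*q+1 \<in> idx p" using 4 by (auto simp: idx_def)
        moreover have v: "D 1 k = - D (2*q+1) 2 / phi q"
        proof -
          have "D 1 k * phi q = - (D 1 k * (- 1 - phi q)) - D 1 k" by (simp add: algebra_simps)
          also have "\<dots> = - D (2*q+1) 2" using e by simp
          finally have "D 1 k * phi q = - D (2*q+1) 2" .
          then show ?thesis using nz by (metis nonzero_mult_div_cancel_right)
        qed
        ultimately show ?thesis using row1 4 by (simp add: adf_def Tsum_apply Tsum_apply2 x_def)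
      qed
    qed
  qed
  then show ?thesis using sx by blast
qed





lemma sum_ebas2: "(\<Sum>a\<in>A. f a * ebas a n) = (if n \<in> A \<and> finite A then f n else (0::complex))"
proof (cases "finite A")
  case True
  have "(\<Sum>a\<in>A. f a * ebas a n) = (\<Sum>a\<in>A. if a = n then f a else 0)"
    by (rule sum.cong) (auto simp: ebas_def)
  then show ?thesis using True by (simp add: sum.delta)
qed simp

lemma sum_if_ebas1: "(\<Sum>a\<in>A. f a * (if C then ebas a n * c else 0)) = (if C then (if n \<in> A \<and> finite A then f n * c else (0::complex)) else 0)"
proof (cases C)
  case True
  have "(\<Sum>a\<in>A. f a * (if C then ebas a n * c else 0)) = (\<Sum>a\<in>A. (f a * c) * ebas a n)"
    using True by (simp add: mult_ac)
  then show ?thesis using True by (simp add: sum_ebas2)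
qed simp

lemma sum_if_ebas2: "(\<Sum>a\<in>A. f a * (if C then ebas a n else 0)) = (if C then (if n \<in> A \<and> finite A then f n else (0::complex)) else 0)"
  by (cases C) (simp_all add: sum_ebas2)

lemma adf_decomp:
  assumes p: "p \<ge> 1" and x: "supp_vec p x"
  shows "adf phi p x = (\<Sum>a\<in>idx p. mscale (x a) (adf phi p (ebas a)))"
proof (intro ext)
  fix i k
  have i2: "2 \<in> idx p" using p by (simp add: idx_def)
  have "(\<Sum>a\<in>idx p. mscale (x a) (adf phi p (ebas a))) i k = (\<Sum>a\<in>idx p. x a * adf phi p (ebas a) i k)"
    by (simp add: sum_fun2 mscale_def)
  also have "\<dots> = adf phi p x i k"
    unfolding adf_def
    apply (simp only: ring_distribs sum.distrib sum_subtractf sum_if_ebas1 sum_if_ebas2 fin_idx simp_thms)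
    using i2 x by (auto simp: idx_def supp_vec_def)
  finally show "adf phi p x i k = (\<Sum>a\<in>idx p. mscale (x a) (adf phi p (ebas a))) i k" by simp
qed

definition fq :: "(nat \<Rightarrow> complex) \<Rightarrow> nat \<Rightarrow> (nat \<Rightarrow> nat \<Rightarrow> complex) \<Rightarrow> complex" where
  "fq phi q D = D (2*q+1) (2*q+1) + phi q * D 1 1"

lemma fq_adf: "p \<ge> 1 \<Longrightarrow> 1 \<le> q \<Longrightarrow> q < p \<Longrightarrow> fq phi q (adf phi p x) = 0"
  unfolding fq_def adf_def by (simp add: idx_def)

lemma fq_Tm: "1 \<le> q \<Longrightarrow> 1 \<le> r \<Longrightarrow> fq phi q (Tm r) = (if q = r then 1 else 0)"
  unfolding fq_def Tm_def by simp

lemma fq_subspace: "V.subspace {D. fq phi q D = 0}"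
  unfolding V.subspace_def fq_def mscale_def
proof (intro conjI ballI allI)
  fix x y :: "nat \<Rightarrow> nat \<Rightarrow> complex"
  assume "x \<in> {D. D (2*q+1) (2*q+1) + phi q * D 1 1 = 0}" "y \<in> {D. D (2*q+1) (2*q+1) + phi q * D 1 1 = 0}"
  then have "x (2*q+1) (2*q+1) + phi q * x 1 1 = 0" "y (2*q+1) (2*q+1) + phi q * y 1 1 = 0" by auto
  then have "(x (2*q+1) (2*q+1) + phi q * x 1 1) + (y (2*q+1) (2*q+1) + phi q * y 1 1) = 0" by simp
  then show "x + y \<in> {D. D (2*q+1) (2*q+1) + phi q * D 1 1 = 0}" by (simp add: algebra_simps)
next
  fix c :: complex and x :: "nat \<Rightarrow> nat \<Rightarrow> complex"
  assume "x \<in> {D. D (2*q+1) (2*q+1) + phi q * D 1 1 = 0}"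
  then have "c * (x (2*q+1) (2*q+1) + phi q * x 1 1) = 0" by simp
  then show "(\<lambda>i j. c * x i j) \<in> {D. D (2*q+1) (2*q+1) + phi q * D 1 1 = 0}" by (simp add: algebra_simps)
qed simp

lemma indep_step:
  assumes p: "p \<ge> 1" and BI: "B \<subseteq> {adf phi p x | x. True}" and iB: "V.independent B" and fB: "finite B"
  shows "n \<le> p - 1 \<Longrightarrow> V.independent (B \<union> Tm ` {1..n}) \<and> card (B \<union> Tm ` {1..n}) = card B + n"
proof (induction n)
  case 0
  then show ?case using iB by simp
next
  case (Suc n)
  let ?S = "B \<union> Tm ` {1..n}"
  have IH: "V.independent ?S" "card ?S = card B + n" using Suc by auto
  have q: "1 \<le> Suc n" "Suc n < p" using Suc.prems by auto
  have "?S \<subseteq> {D. fq phi (Suc n) D = 0}"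
  proof
    fix D assume "D \<in> ?S"
    then show "D \<in> {D. fq phi (Suc n) D = 0}"
    proof
      assume "D \<in> B" then obtain x where "D = adf phi p x" using BI by blast
      then show ?thesis using fq_adf[OF p q] by simp
    next
      assume "D \<in> Tm ` {1..n}" then obtain r where "r \<in> {1..n}" "D = Tm r" by blast
      then show ?thesis using fq_Tm[of "Suc n" r phi] by simp
    qed
  qed
  then have sp: "V.span ?S \<subseteq> {D. fq phi (Suc n) D = 0}" by (rule V.span_minimal[OF _ fq_subspace])
  have "fq phi (Suc n) (Tm (Suc n)) = 1" using fq_Tm[of "Suc n" "Suc n" phi] by simp
  then have nin: "Tm (Suc n) \<notin> V.span ?S" using sp by auto
  then have nin2: "Tm (Suc n) \<notin> ?S" using V.span_superset[of ?S] by blast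
  have "{1..Suc n} = insert (Suc n) {1..n}" by auto
  then have eq: "B \<union> Tm ` {1..Suc n} = insert (Tm (Suc n)) ?S" by auto
  have fin: "finite ?S" using fB by simp
  have "V.independent (insert (Tm (Suc n)) ?S)" using IH(1) nin by (rule V.independent_insertI[rotated])
  moreover have "card (insert (Tm (Suc n)) ?S) = card B + Suc n" using IH(2) nin2 fin by simp
  ultimately show ?case unfolding eq by simp
qed


theorem corollary1:
  fixes p :: nat and phi :: "nat \<Rightarrow> complex"
  assumes "p \<ge> 2" and "notOmega1 p phi"
  shows "vector_space.dim mscale (Der phi p) = vector_space.dim mscale (Inn phi p) + (p - 1)"
proof -
  have p: "p \<ge> 1" using assms(1) by simp
  note N = assms(2)
  have Inn_eq: "Inn phi p = {adf phi p x | x. supp_vec p x}" unfolding Inn_def using ad_eq[OF p] by simp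
  obtain B where B: "B \<subseteq> Inn phi p" "V.independent B" "Inn phi p \<subseteq> V.span B" "card B = V.dim (Inn phi p)"
    using V.basis_exists by blast
  let ?F = "(\<lambda>a. adf phi p (ebas a)) ` idx p"
  have InnF: "Inn phi p \<subseteq> V.span ?F"
  proof
    fix D assume "D \<in> Inn phi p"
    then obtain x where x: "supp_vec p x" "D = adf phi p x" using Inn_eq by auto
    have "adf phi p x \<in> V.span ?F" unfolding adf_decomp[OF p x(1)]
      by (intro V.span_sum V.span_scale V.span_base) auto
    then show "D \<in> V.span ?F" using x by simp
  qed
  have fB: "finite B" using V.independent_span_bound[of ?F B] B(1,2) InnF by auto
  have BI: "B \<subseteq> {adf phi p x | x. True}" using B(1) Inn_eq by auto
  let ?T = "Tm ` {1..p-1}"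
  have ind: "V.independent (B \<union> ?T)" "card (B \<union> ?T) = card B + (p-1)"
    using indep_step[OF p BI B(2) fB, of "p-1"] by auto
  have sub1: "B \<union> ?T \<subseteq> Der phi p" using B(1) Inn_eq adf_Der[OF p] Tm_Der[OF p] by auto
  have sub2: "Der phi p \<subseteq> V.span (B \<union> ?T)"
  proof
    fix D assume "D \<in> Der phi p"
    then obtain x c where xc: "supp_vec p x" "D = adf phi p x + (\<Sum>q\<in>{1..p-1}. mscale (c q) (Tm q))"
      using decomp[OF p N] by blast
    have "adf phi p x \<in> Inn phi p" using Inn_eq xc(1) by auto
    then have "adf phi p x \<in> V.span B" using B(3) by auto
    then have a: "adf phi p x \<in> V.span (B \<union> ?T)" using V.span_mono[of B "B \<union> ?T"] by auto
    have b: "(\<Sum>q\<in>{1..p-1}. mscale (c q) (Tm q)) \<in> V.span (B \<union> ?T)"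
      by (intro V.span_sum V.span_scale V.span_base) auto
    show "D \<in> V.span (B \<union> ?T)" using V.span_add[OF a b] xc(2) by simp
  qed
  have "V.span (B \<union> ?T) = V.span (Der phi p)"
  proof
    show "V.span (B \<union> ?T) \<subseteq> V.span (Der phi p)" using V.span_mono[OF sub1] .
    show "V.span (Der phi p) \<subseteq> V.span (B \<union> ?T)" using V.span_mono[OF sub2] V.span_span by blast
  qed
  then have "V.dim (Der phi p) = card (B \<union> ?T)" using V.dim_eq_card ind(1) by blast
  then show ?thesis using ind(2) B(4) by simp
qed


end
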